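(* For all integers $k,l\ge1$, $sat^*([k]\times[l],\vee_2)=La^*([k]\times[l],\vee_2)=k+l-1$.
   Context: $[k]\times[l]$ is ordered coordinatewise. $\vee_2$ is the poset on three elements $a,b_1,b_2$ whose only relations are $a<b_1,a<b_2$. For posets $P,R$, $P$ is a strong subposet of $R$ if there is an injection $i:P\to R$ with $p\le_P p'\iff i(p)\le_R i(p')$. A subset $F\subseteq Q$ is strong $P$-free if $P$ is not a strong subposet of $F$; it is strong $P$-saturated if it is strong $P$-free and for every $x\in Q\setminus F$, $P$ is a strong subposet of $F\cup\{x\}$. $La^*(Q,P)$ is the maximum size of a strong $P$-free subset of $Q$ and $sat^*(Q,P)$ the minimum size of a strong $P$-saturated subset of $Q$. *)

theory Defs
  imports Main
begin

definition grid :: "nat \<Rightarrow> nat \<Rightarrow> (nat \<times> nat) set" where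
  "grid k l = {1..k} \<times> {1..l}"

definition grid_le :: "nat \<times> nat \<Rightarrow> nat \<times> nat \<Rightarrow> bool" where
  "grid_le x y \<longleftrightarrow> fst x \<le> fst y \<and> snd x \<le> snd y"

text \<open>The poset V_2 on {0,1,2}: a = 0, b1 = 1, b2 = 2, with only relations a < b1, a < b2.\<close>
definition V2 :: "nat set" where
  "V2 = {0, 1, 2}"

definition V2_le :: "nat \<Rightarrow> nat \<Rightarrow> bool" where
  "V2_le p q \<longleftrightarrow> p = q \<or> (p = 0 \<and> (q = 1 \<or> q = 2))"

definition strong_subposet ::
  "'a set \<Rightarrow> ('a \<Rightarrow> 'a \<Rightarrow> bool) \<Rightarrow> 'b set \<Rightarrow> ('b \<Rightarrow> 'b \<Rightarrow> bool) \<Rightarrow> bool" where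
  "strong_subposet P leP R leR \<longleftrightarrow>
     (\<exists>i. inj_on i P \<and> i ` P \<subseteq> R \<and>
          (\<forall>p\<in>P. \<forall>p'\<in>P. leP p p' \<longleftrightarrow> leR (i p) (i p')))"

definition strong_free ::
  "'b set \<Rightarrow> ('b \<Rightarrow> 'b \<Rightarrow> bool) \<Rightarrow> 'a set \<Rightarrow> ('a \<Rightarrow> 'a \<Rightarrow> bool) \<Rightarrow> 'b set \<Rightarrow> bool" where
  "strong_free Q leQ P leP F \<longleftrightarrow> F \<subseteq> Q \<and> \<not> strong_subposet P leP F leQ"

definition strong_saturated ::
  "'b set \<Rightarrow> ('b \<Rightarrow> 'b \<Rightarrow> bool) \<Rightarrow> 'a set \<Rightarrow> ('a \<Rightarrow> 'a \<Rightarrow> bool) \<Rightarrow> 'b set \<Rightarrow> bool" where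
  "strong_saturated Q leQ P leP F \<longleftrightarrow> strong_free Q leQ P leP F \<and>
     (\<forall>x \<in> Q - F. strong_subposet P leP (insert x F) leQ)"

text \<open>La^*(Q,P): maximum size of a strong P-free subset; sat^*(Q,P): minimum size of a
  strong P-saturated subset (meaningful for finite Q).\<close>
definition La_star ::
  "'b set \<Rightarrow> ('b \<Rightarrow> 'b \<Rightarrow> bool) \<Rightarrow> 'a set \<Rightarrow> ('a \<Rightarrow> 'a \<Rightarrow> bool) \<Rightarrow> nat" where
  "La_star Q leQ P leP = Max (card ` {F. strong_free Q leQ P leP F})"

definition sat_star ::
  "'b set \<Rightarrow> ('b \<Rightarrow> 'b \<Rightarrow> bool) \<Rightarrow> 'a set \<Rightarrow> ('a \<Rightarrow> 'a \<Rightarrow> bool) \<Rightarrow> nat" where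
  "sat_star Q leQ P leP = Min (card ` {F. strong_saturated Q leQ P leP F})"

end

theory Submission
  imports Defs
begin

definition hasV :: "(nat \<times> nat) set \<Rightarrow> bool" where
  "hasV S \<longleftrightarrow> (\<exists>a\<in>S. \<exists>b\<in>S. \<exists>c\<in>S. a \<noteq> b \<and> a \<noteq> c \<and> grid_le a b \<and> grid_le a c \<and>
      \<not> grid_le b c \<and> \<not> grid_le c b)"

lemma hasV_iff: "strong_subposet V2 V2_le S grid_le \<longleftrightarrow> hasV S"
proof
  assume "strong_subposet V2 V2_le S grid_le"
  then obtain i where inj: "inj_on i V2" and sub: "i ` V2 \<subseteq> S"
    and eq: "\<forall>p\<in>V2. \<forall>p'\<in>V2. V2_le p p' \<longleftrightarrow> grid_le (i p) (i p')"
    unfolding strong_subposet_def by blast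
  have m: "(0::nat) \<in> V2" "(1::nat) \<in> V2" "(2::nat) \<in> V2" by (auto simp: V2_def)
  have d1: "i 0 \<noteq> i 1" using inj m unfolding inj_on_def by (metis zero_neq_one)
  have d2: "i 0 \<noteq> i 2" using inj m unfolding inj_on_def by (metis zero_neq_numeral)
  have "grid_le (i 0) (i 1)" "grid_le (i 0) (i 2)" "\<not> grid_le (i 1) (i 2)" "\<not> grid_le (i 2) (i 1)"
    using eq[rule_format, OF m(1) m(2)] eq[rule_format, OF m(1) m(3)]
      eq[rule_format, OF m(2) m(3)] eq[rule_format, OF m(3) m(2)] by (auto simp: V2_le_def)
  then show "hasV S" unfolding hasV_def using d1 d2 sub m by blast
next
  assume "hasV S"
  then obtain a b c where abc: "a \<in> S" "b \<in> S" "c \<in> S" "a \<noteq> b" "a \<noteq> c" "grid_le a b" "grid_le a c"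
      "\<not> grid_le b c" "\<not> grid_le c b" unfolding hasV_def by blast
  define i where "i = (\<lambda>n::nat. if n = 0 then a else if n = 1 then b else c)"
  have bc: "b \<noteq> c" using abc by (auto simp: grid_le_def)
  have "inj_on i V2" using abc bc by (auto simp: inj_on_def i_def V2_def)
  moreover have "i ` V2 \<subseteq> S" using abc by (auto simp: i_def V2_def)
  moreover have "\<forall>p\<in>V2. \<forall>p'\<in>V2. V2_le p p' \<longleftrightarrow> grid_le (i p) (i p')"
    using abc by (auto simp: i_def V2_def V2_le_def grid_le_def prod_eq_iff)
  ultimately show "strong_subposet V2 V2_le S grid_le" unfolding strong_subposet_def by blast
qed

lemma noV: "\<not> hasV F \<Longrightarrow> a \<in> F \<Longrightarrow> b \<in> F \<Longrightarrow> c \<in> F \<Longrightarrow> a \<noteq> b \<Longrightarrow> a \<noteq> c \<Longrightarrow>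
   grid_le a b \<Longrightarrow> grid_le a c \<Longrightarrow> grid_le b c \<or> grid_le c b"
  unfolding hasV_def by blast

definition istop :: "(nat \<times> nat) set \<Rightarrow> nat \<times> nat \<Rightarrow> bool" where
  "istop F x \<longleftrightarrow> \<not> (\<exists>z\<in>F. fst z = fst x \<and> snd z > snd x)"

definition phi :: "nat \<Rightarrow> (nat \<times> nat) set \<Rightarrow> nat \<times> nat \<Rightarrow> nat" where
  "phi k F x = (if istop F x then fst x else k + snd x)"

lemma phi_inj:
  assumes "\<not> hasV F" "F \<subseteq> grid k l"
  shows "inj_on (phi k F) F"
proof (rule inj_onI)
  fix x y assume x: "x \<in> F" and y: "y \<in> F" and e: "phi k F x = phi k F y"
  have gx: "fst x \<le> k" "snd x \<ge> 1" "fst x \<ge> 1" using x assms(2) by (auto simp: grid_def)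
  have gy: "fst y \<le> k" "snd y \<ge> 1" "fst y \<ge> 1" using y assms(2) by (auto simp: grid_def)
  show "x = y"
  proof (cases "istop F x")
    case tx: True
    show ?thesis
    proof (cases "istop F y")
      case True
      with tx e have "fst x = fst y" by (simp add: phi_def)
      then show ?thesis using tx True x y unfolding istop_def
        by (metis linorder_neqE_nat prod_eq_iff)
    next
      case False
      with tx e gx gy show ?thesis by (simp add: phi_def)
    qed
  next
    case tx: False
    show ?thesis
    proof (cases "istop F y")
      case True
      with tx e gx gy show ?thesis by (simp add: phi_def)
    next
      case ty: False
      with tx e have r: "snd x = snd y" by (simp add: phi_def)
      show ?thesis
      proof (rule ccontr)
        assume ne: "x \<noteq> y"
        with r have "fst x \<noteq> fst y" by (auto simp: prod_eq_iff)
        then consider "fst x < fst y" | "fst y < fst x" by linarith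
        then show False
        proof cases
          case 1
          from tx obtain z where z: "z \<in> F" "fst z = fst x" "snd z > snd x" unfolding istop_def by blast
          have "x \<noteq> z" using z by auto
          from noV[OF assms(1) x z(1) y this ne] z r 1 show False by (auto simp: grid_le_def)
        next
          case 2
          from ty obtain z where z: "z \<in> F" "fst z = fst y" "snd z > snd y" unfolding istop_def by blast
          have "y \<noteq> z" using z by auto
          from noV[OF assms(1) y z(1) x this ne[symmetric]] z r 2 show False by (auto simp: grid_le_def)
        qed
      qed
    qed
  qed
qed

lemma phi_range:
  assumes "F \<subseteq> grid k l"
  shows "phi k F ` F \<subseteq> {1..k + l - 1}"
proof
  fix n assume "n \<in> phi k F ` F"
  then obtain x where x: "x \<in> F" and n: "n = phi k F x" by blast
  have g: "fst x \<le> k" "snd x \<ge> 1" "fst x \<ge> 1" "snd x \<le> l" using x assms by (auto simp: grid_def)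
  show "n \<in> {1..k + l - 1}"
  proof (cases "istop F x")
    case True then show ?thesis using n g by (simp add: phi_def)
  next
    case False
    then obtain z where z: "z \<in> F" "fst z = fst x" "snd z > snd x" unfolding istop_def by blast
    have "snd z \<le> l" using z assms by (auto simp: grid_def)
    then show ?thesis using n g z False by (simp add: phi_def)
  qed
qed

lemma upper:
  assumes "F \<subseteq> grid k l" "\<not> hasV F"
  shows "card F \<le> k + l - 1"
proof -
  have "card F \<le> card {1..k + l - 1}"
    by (rule card_inj_on_le[OF phi_inj[OF assms(2,1)] phi_range[OF assms(1)]]) simp
  then show ?thesis by simp
qed

lemma gle_antisym: "grid_le x y \<Longrightarrow> grid_le y x \<Longrightarrow> x = y"
  by (simp add: grid_le_def prod_eq_iff)

lemma gle_trans: "grid_le x y \<Longrightarrow> grid_le y z \<Longrightarrow> grid_le x z"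
  by (auto simp: grid_le_def)

lemma ex_max_f:
  assumes "finite A" "A \<noteq> {}"
  shows "\<exists>m\<in>A. \<forall>b\<in>A. (f b :: nat) \<le> f m"
proof -
  have "Max (f ` A) \<in> f ` A" using assms by simp
  then obtain m where "m \<in> A" "f m = Max (f ` A)" by force
  moreover have "\<forall>b\<in>A. f b \<le> Max (f ` A)" using assms(1) by simp
  ultimately show ?thesis by metis
qed

lemma ex_min_f:
  assumes "finite A" "A \<noteq> {}"
  shows "\<exists>m\<in>A. \<forall>b\<in>A. (f m :: nat) \<le> f b"
proof -
  have "Min (f ` A) \<in> f ` A" using assms by simp
  then obtain m where "m \<in> A" "f m = Min (f ` A)" by force
  moreover have "\<forall>b\<in>A. Min (f ` A) \<le> f b" using assms(1) by simp
  ultimately show ?thesis by metis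
qed

lemma max_above:
  assumes "finite L" "a \<in> L"
  shows "\<exists>m\<in>L. grid_le a m \<and> (\<forall>d\<in>L. grid_le m d \<longrightarrow> d = m)"
proof -
  let ?A = "{d\<in>L. grid_le a d}"
  have "a \<in> ?A" using assms by (simp add: grid_le_def)
  then have "?A \<noteq> {}" by blast
  have "finite ?A" using assms(1) by simp
  obtain m where
    m: "m \<in> ?A" and mx: "\<forall>b\<in>?A. fst b + snd b \<le> fst m + snd m"
    using ex_max_f[OF \<open>finite ?A\<close> \<open>?A \<noteq> {}\<close>, of "\<lambda>d. fst d + snd d"] by (elim bexE)
  have "\<forall>d\<in>L. grid_le m d \<longrightarrow> d = m"
  proof (intro ballI impI)
    fix d assume d: "d \<in> L" "grid_le m d"
    then have "d \<in> ?A" using m by (auto simp: grid_le_def)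
    with mx have "fst d + snd d \<le> fst m + snd m" by blast
    with d(2) have "grid_le d m" by (simp add: grid_le_def)
    with d(2) show "d = m" using gle_antisym by blast
  qed
  with m show ?thesis by blast
qed

lemma insert_V:
  assumes "hasV (insert x F)" "\<not> hasV F"
  shows "(\<exists>b\<in>F. \<exists>c\<in>F. x \<noteq> b \<and> x \<noteq> c \<and> grid_le x b \<and> grid_le x c \<and> \<not> grid_le b c \<and> \<not> grid_le c b)
    \<or> (\<exists>a\<in>F. \<exists>c\<in>F. a \<noteq> x \<and> a \<noteq> c \<and> grid_le a x \<and> grid_le a c \<and> \<not> grid_le x c \<and> \<not> grid_le c x)"
proof -
  obtain a b c where abc: "a \<in> insert x F" "b \<in> insert x F" "c \<in> insert x F" "a \<noteq> b" "a \<noteq> c"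
    "grid_le a b" "grid_le a c" "\<not> grid_le b c" "\<not> grid_le c b"
    using assms(1) unfolding hasV_def by blast
  have bc: "b \<noteq> c" using abc(8) by (auto simp: grid_le_def)
  have notall: "\<not> (a \<in> F \<and> b \<in> F \<and> c \<in> F)"
    using assms(2) abc unfolding hasV_def by blast
  consider "a = x" | "b = x" | "c = x"
    using abc(1-3) notall by blast
  then show ?thesis
  proof cases
    case 1
    then have "b \<in> F" "c \<in> F" using abc by auto
    then show ?thesis using abc 1 by blast
  next
    case 2
    then have "a \<in> F" "c \<in> F" using abc bc by auto
    then show ?thesis using abc 2 bc by blast
  next
    case 3
    then have "a \<in> F" "b \<in> F" using abc bc by auto
    then show ?thesis using abc 3 bc by blast
  qed
qed

lemma colA:
  assumes F: "F \<subseteq> grid k l" and nV: "\<not> hasV F" and i: "1 \<le> i" "i \<le> k" and l: "1 \<le> l"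
    and emp: "\<forall>y\<in>F. fst y \<noteq> i"
  shows "\<exists>x\<in>grid k l - F. \<not> hasV (insert x F)"
proof -
  have finF: "finite F" using F finite_subset by (auto simp: grid_def)
  define L where "L = {y\<in>F. fst y < i}"
  have finL: "finite L" using finF by (simp add: L_def)
  show ?thesis
  proof (cases "L = {}")
    case True
    define x where "x = (i, l)"
    have xg: "x \<in> grid k l - F" using i l emp by (auto simp: x_def grid_def)
    have "\<not> hasV (insert x F)"
    proof
      assume "hasV (insert x F)"
      from insert_V[OF this nV] show False
      proof
        assume "\<exists>b\<in>F. \<exists>c\<in>F. x \<noteq> b \<and> x \<noteq> c \<and> grid_le x b \<and> grid_le x c \<and> \<not> grid_le b c \<and> \<not> grid_le c b"
        then obtain b c where bc: "b \<in> F" "c \<in> F" "grid_le x b" "grid_le x c" "\<not> grid_le b c" "\<not> grid_le c b" by blast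
        have "snd b \<le> l" "snd c \<le> l" using bc F by (auto simp: grid_def)
        then show False using bc by (auto simp: grid_le_def x_def)
      next
        assume "\<exists>a\<in>F. \<exists>c\<in>F. a \<noteq> x \<and> a \<noteq> c \<and> grid_le a x \<and> grid_le a c \<and> \<not> grid_le x c \<and> \<not> grid_le c x"
        then obtain a where a: "a \<in> F" "grid_le a x" by blast
        have "fst a \<noteq> i" using emp a by blast
        then have "a \<in> L" using a by (auto simp: L_def grid_le_def x_def)
        then show False using True by blast
      qed
    qed
    then show ?thesis using xg by blast
  next
    case False
    define M where "M = {e\<in>L. \<forall>d\<in>L. grid_le e d \<longrightarrow> d = e}"
    have MA: "\<exists>m\<in>M. grid_le a m" if "a \<in> L" for a
      using max_above[OF finL that] by (auto simp: M_def)
    have "M \<noteq> {}" using False MA by blast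
    moreover have "finite M" using finL by (simp add: M_def)
    ultimately obtain e1 where e1M: "e1 \<in> M" and e1min: "\<forall>b\<in>M. snd e1 \<le> snd b"
      using ex_min_f[of M snd] by blast
    have e1L: "e1 \<in> L" and e1max: "\<forall>d\<in>L. grid_le e1 d \<longrightarrow> d = e1" using e1M by (auto simp: M_def)
    have e1F: "e1 \<in> F" and e1i: "fst e1 < i" using e1L by (auto simp: L_def)
    define r where "r = snd e1"
    define x where "x = (i, r)"
    have "snd e1 \<ge> 1" "snd e1 \<le> l" using e1F F by (auto simp: grid_def)
    then have xg: "x \<in> grid k l - F" using i emp by (auto simp: x_def r_def grid_def)
    have "\<not> hasV (insert x F)"
    proof
      assume "hasV (insert x F)"
      from insert_V[OF this nV] show False
      proof
        assume "\<exists>b\<in>F. \<exists>c\<in>F. x \<noteq> b \<and> x \<noteq> c \<and> grid_le x b \<and> grid_le x c \<and> \<not> grid_le b c \<and> \<not> grid_le c b"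
        then obtain b c where bc: "b \<in> F" "c \<in> F" "grid_le x b" "grid_le x c" "\<not> grid_le b c" "\<not> grid_le c b" by blast
        have "e1 \<noteq> b" "e1 \<noteq> c" "grid_le e1 b" "grid_le e1 c" using bc e1i by (auto simp: grid_le_def x_def r_def)
        from noV[OF nV e1F bc(1,2) this] bc show False by blast
      next
        assume "\<exists>a\<in>F. \<exists>c\<in>F. a \<noteq> x \<and> a \<noteq> c \<and> grid_le a x \<and> grid_le a c \<and> \<not> grid_le x c \<and> \<not> grid_le c x"
        then obtain a c where ac: "a \<in> F" "c \<in> F" "a \<noteq> x" "a \<noteq> c" "grid_le a x" "grid_le a c" "\<not> grid_le x c" "\<not> grid_le c x" by blast
        have "fst a \<noteq> i" "fst c \<noteq> i" using emp ac by blast+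
        then have aL: "a \<in> L" using ac by (auto simp: L_def grid_le_def x_def)
        have "fst c > i \<and> snd c < r \<or> fst c < i \<and> snd c > r"
          using ac \<open>fst c \<noteq> i\<close> by (auto simp: grid_le_def x_def)
        then show False
        proof
          assume c: "fst c > i \<and> snd c < r"
          obtain m where m: "m \<in> M" "grid_le a m" using MA[OF aL] by blast
          have "snd m \<ge> r" using e1min m by (auto simp: r_def)
          have "fst m < i" "m \<in> F" using m by (auto simp: M_def L_def)
          have "a \<noteq> m" using ac c \<open>snd m \<ge> r\<close> by (auto simp: grid_le_def)
          from noV[OF nV ac(1) \<open>m \<in> F\<close> ac(2) this ac(4) m(2) ac(6)] c \<open>snd m \<ge> r\<close> \<open>fst m < i\<close>
          show False by (auto simp: grid_le_def)
        next
          assume c: "fst c < i \<and> snd c > r"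
          then have cL: "c \<in> L" using ac by (auto simp: L_def)
          obtain m where m: "m \<in> M" "grid_le c m" using MA[OF cL] by blast
          have mL: "m \<in> L" "m \<in> F" using m by (auto simp: M_def L_def)
          have "snd m > r" using m c by (auto simp: grid_le_def)
          have "fst m < fst e1"
          proof (rule ccontr)
            assume "\<not> fst m < fst e1"
            then have "grid_le e1 m" using \<open>snd m > r\<close> by (auto simp: grid_le_def r_def)
            then have "m = e1" using e1max mL by blast
            then show False using \<open>snd m > r\<close> by (simp add: r_def)
          qed
          have ae: "grid_le a e1" using ac c \<open>fst m < fst e1\<close> m(2)
            by (auto simp: grid_le_def x_def r_def)
          have am: "grid_le a m" using ac(6) m(2) by (auto simp: grid_le_def)
          have "a \<noteq> e1" using ac(6) c \<open>fst m < fst e1\<close> m(2) by (auto simp: grid_le_def)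
          moreover have "a \<noteq> m" using ac(4,6) m(2) gle_antisym by blast
          ultimately have "grid_le e1 m \<or> grid_le m e1" using noV[OF nV ac(1) e1F mL(2) _ _ ae am] by blast
          then show False using \<open>fst m < fst e1\<close> \<open>snd m > r\<close> by (auto simp: grid_le_def r_def)
        qed
      qed
    qed
    then show ?thesis using xg by blast
  qed
qed

lemma rowB:
  assumes F: "F \<subseteq> grid k l" and nV: "\<not> hasV F" and j: "1 \<le> j" "j < l" and k: "1 \<le> k"
    and root: "(k, l) \<in> F"
    and H: "\<forall>y\<in>F. snd y = j \<longrightarrow> istop F y"
  shows "\<exists>x\<in>grid k l - F. \<not> hasV (insert x F)"
proof -
  have finF: "finite F" using F finite_subset by (auto simp: grid_def)
  define D where "D = {y\<in>F. snd y \<le> j}"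
  have finD: "finite D" using finF by (simp add: D_def)
  show ?thesis
  proof (cases "D = {}")
    case True
    define x where "x = (k, j)"
    have xg: "x \<in> grid k l - F" using j k True by (auto simp: x_def grid_def D_def)
    have "\<not> hasV (insert x F)"
    proof
      assume "hasV (insert x F)"
      from insert_V[OF this nV] show False
      proof
        assume "\<exists>b\<in>F. \<exists>c\<in>F. x \<noteq> b \<and> x \<noteq> c \<and> grid_le x b \<and> grid_le x c \<and> \<not> grid_le b c \<and> \<not> grid_le c b"
        then obtain b c where bc: "b \<in> F" "c \<in> F" "grid_le x b" "grid_le x c" "\<not> grid_le b c" "\<not> grid_le c b" by blast
        have "fst b \<le> k" "fst c \<le> k" using bc F by (auto simp: grid_def)
        then show False using bc by (auto simp: grid_le_def x_def)
      next
        assume "\<exists>a\<in>F. \<exists>c\<in>F. a \<noteq> x \<and> a \<noteq> c \<and> grid_le a x \<and> grid_le a c \<and> \<not> grid_le x c \<and> \<not> grid_le c x"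
        then obtain a where a: "a \<in> F" "grid_le a x" by blast
        then have "a \<in> D" by (auto simp: D_def grid_le_def x_def)
        then show False using True by blast
      qed
    qed
    then show ?thesis using xg by blast
  next
    case False
    define M where "M = {e\<in>D. \<forall>d\<in>D. grid_le e d \<longrightarrow> d = e}"
    have MA: "\<exists>m\<in>M. grid_le a m" if "a \<in> D" for a
      using max_above[OF finD that] by (auto simp: M_def)
    have "M \<noteq> {}" using False MA by blast
    moreover have "finite M" using finD by (simp add: M_def)
    ultimately obtain e1 where e1M: "e1 \<in> M" and e1min: "\<forall>b\<in>M. fst e1 \<le> fst b"
      using ex_min_f[of M fst] by blast
    have e1D: "e1 \<in> D" and e1max: "\<forall>d\<in>D. grid_le e1 d \<longrightarrow> d = e1" using e1M by (auto simp: M_def)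
    have e1F: "e1 \<in> F" and e1j: "snd e1 \<le> j" using e1D by (auto simp: D_def)
    define U where "U = {y\<in>F. grid_le e1 y \<and> y \<noteq> e1}"
    have "(k, l) \<in> U" using root e1F F e1j j by (auto simp: U_def grid_def grid_le_def)
    then have "U \<noteq> {}" by blast
    moreover have "finite U" using finF by (simp add: U_def)
    ultimately obtain p where pU: "p \<in> U" and pmin0: "\<forall>b\<in>U. fst p + snd p \<le> fst b + snd b"
      using ex_min_f[of U "\<lambda>d. fst d + snd d"] by blast
    have pF: "p \<in> F" and e1p: "grid_le e1 p" "p \<noteq> e1" using pU by (auto simp: U_def)
    have pmin: "grid_le p u" if u: "u \<in> U" for u
    proof (cases "u = p")
      case True then show ?thesis by (simp add: grid_le_def)
    next
      case False
      have uF: "u \<in> F" "grid_le e1 u" "u \<noteq> e1" using u by (auto simp: U_def)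
      have "grid_le p u \<or> grid_le u p"
        using noV[OF nV e1F pF uF(1) e1p(2)[symmetric] uF(3)[symmetric] e1p(1) uF(2)] .
      moreover have "fst p + snd p \<le> fst u + snd u" using pmin0 u by blast
      ultimately show ?thesis using False by (auto simp: grid_le_def prod_eq_iff)
    qed
    have pj: "snd p > j"
    proof (rule ccontr)
      assume "\<not> snd p > j"
      then have "p \<in> D" using pF by (auto simp: D_def)
      then show False using e1max e1p by blast
    qed
    define x where "x = (fst p, j)"
    have pg: "fst p \<ge> 1" "fst p \<le> k" using pF F by (auto simp: grid_def)
    have xnF: "x \<notin> F"
    proof
      assume xF: "x \<in> F"
      then have "istop F x" using H by (simp add: x_def)
      then show False using pF pj unfolding istop_def x_def by auto
    qed
    have xg: "x \<in> grid k l - F" using pg j xnF by (auto simp: x_def grid_def)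
    have e1x: "grid_le e1 x" using e1p(1) e1j by (auto simp: grid_le_def x_def)
    have xp: "grid_le x p" using pj by (auto simp: grid_le_def x_def)
    have "\<not> hasV (insert x F)"
    proof
      assume "hasV (insert x F)"
      from insert_V[OF this nV] show False
      proof
        assume "\<exists>b\<in>F. \<exists>c\<in>F. x \<noteq> b \<and> x \<noteq> c \<and> grid_le x b \<and> grid_le x c \<and> \<not> grid_le b c \<and> \<not> grid_le c b"
        then obtain b c where bc: "b \<in> F" "c \<in> F" "grid_le x b" "grid_le x c" "\<not> grid_le b c" "\<not> grid_le c b" by blast
        have "grid_le e1 b" "grid_le e1 c" using bc(3,4) e1x gle_trans by blast+
        moreover have "e1 \<noteq> b" using bc(3) e1x gle_antisym xnF e1F by blast
        moreover have "e1 \<noteq> c" using bc(4) e1x gle_antisym xnF e1F by blast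
        ultimately show False using noV[OF nV e1F bc(1,2)] bc by blast
      next
        assume "\<exists>a\<in>F. \<exists>c\<in>F. a \<noteq> x \<and> a \<noteq> c \<and> grid_le a x \<and> grid_le a c \<and> \<not> grid_le x c \<and> \<not> grid_le c x"
        then obtain a c where ac: "a \<in> F" "c \<in> F" "a \<noteq> x" "a \<noteq> c" "grid_le a x" "grid_le a c" "\<not> grid_le x c" "\<not> grid_le c x" by blast
        have ap: "grid_le a p" using ac(5) xp gle_trans by blast
        have anp: "a \<noteq> p" using ac(5) pj by (auto simp: grid_le_def x_def)
        have aD: "a \<in> D" using ac(1,5) by (auto simp: D_def grid_le_def x_def)
        have "fst c > fst p \<and> snd c < j \<or> fst c < fst p \<and> snd c > j"
          using ac(7,8) by (auto simp: grid_le_def x_def)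
        then show False
        proof
          assume c: "fst c > fst p \<and> snd c < j"
          have "grid_le p c \<or> grid_le c p" using noV[OF nV ac(1) pF ac(2) anp ac(4) ap ac(6)] .
          then show False using c pj by (auto simp: grid_le_def)
        next
          assume c: "fst c < fst p \<and> snd c > j"
          have "grid_le p c \<or> grid_le c p" using noV[OF nV ac(1) pF ac(2) anp ac(4) ap ac(6)] .
          then have cp: "grid_le c p" using c by (auto simp: grid_le_def)
          have "c \<noteq> p" using c by auto
          have "\<not> grid_le e1 c"
          proof
            assume "grid_le e1 c"
            moreover have "c \<noteq> e1" using c e1j by auto
            ultimately have "c \<in> U" using ac(2) by (simp add: U_def)
            then have "grid_le p c" by (rule pmin)
            then show False using cp \<open>c \<noteq> p\<close> gle_antisym by blast
          qed
          then have ce1: "fst c < fst e1" using c e1j by (auto simp: grid_le_def)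
          obtain m where m: "m \<in> M" "grid_le a m" using MA[OF aD] by blast
          have mD: "m \<in> D" "m \<in> F" "snd m \<le> j" using m by (auto simp: M_def D_def)
          have "fst m \<ge> fst e1" using e1min m by blast
          have "a \<noteq> m" using ac(6) ce1 \<open>fst m \<ge> fst e1\<close> by (auto simp: grid_le_def)
          have "grid_le m c \<or> grid_le c m" using noV[OF nV ac(1) mD(2) ac(2) \<open>a \<noteq> m\<close> ac(4) m(2) ac(6)] .
          then show False using ce1 \<open>fst m \<ge> fst e1\<close> mD(3) c by (auto simp: grid_le_def)
        qed
      qed
    qed
    then show ?thesis using xg by blast
  qed
qed

lemma root_in:
  assumes F: "F \<subseteq> grid k l" and nV: "\<not> hasV F" and sat: "\<forall>x\<in>grid k l - F. hasV (insert x F)"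
    and k: "1 \<le> k" and l: "1 \<le> l"
  shows "(k, l) \<in> F"
proof (rule ccontr)
  assume nr: "(k, l) \<notin> F"
  then have "hasV (insert (k, l) F)" using sat k l by (auto simp: grid_def)
  from insert_V[OF this nV] show False
  proof
    assume "\<exists>b\<in>F. \<exists>c\<in>F. (k, l) \<noteq> b \<and> (k, l) \<noteq> c \<and> grid_le (k, l) b \<and> grid_le (k, l) c \<and> \<not> grid_le b c \<and> \<not> grid_le c b"
    then obtain b where b: "b \<in> F" "grid_le (k, l) b" by blast
    have "fst b \<le> k" "snd b \<le> l" using b F by (auto simp: grid_def)
    then have "b = (k, l)" using b by (auto simp: grid_le_def prod_eq_iff)
    then show False using b nr by simp
  next
    assume "\<exists>a\<in>F. \<exists>c\<in>F. a \<noteq> (k, l) \<and> a \<noteq> c \<and> grid_le a (k, l) \<and> grid_le a c \<and> \<not> grid_le (k, l) c \<and> \<not> grid_le c (k, l)"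
    then obtain c where c: "c \<in> F" "\<not> grid_le c (k, l)" by blast
    then show False using F by (auto simp: grid_def grid_le_def)
  qed
qed

lemma lower:
  assumes F: "F \<subseteq> grid k l" and nV: "\<not> hasV F" and sat: "\<forall>x\<in>grid k l - F. hasV (insert x F)"
    and k: "1 \<le> k" and l: "1 \<le> l"
  shows "k + l - 1 \<le> card F"
proof -
  have finF: "finite F" using F finite_subset by (auto simp: grid_def)
  have root: "(k, l) \<in> F" using root_in[OF assms] .
  have sub: "{1..k + l - 1} \<subseteq> phi k F ` F"
  proof
    fix n assume n: "n \<in> {1..k + l - 1}"
    show "n \<in> phi k F ` F"
    proof (cases "n \<le> k")
      case True
      have "\<exists>y\<in>F. fst y = n"
      proof (rule ccontr)
        assume "\<not> (\<exists>y\<in>F. fst y = n)"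
        then have "\<forall>y\<in>F. fst y \<noteq> n" by blast
        from colA[OF F nV _ True l this] n obtain x where "x \<in> grid k l - F" "\<not> hasV (insert x F)" by auto
        then show False using sat by blast
      qed
      then have ne: "{y\<in>F. fst y = n} \<noteq> {}" by blast
      have "finite {y\<in>F. fst y = n}" using finF by simp
      from ex_max_f[OF this ne, of snd] obtain t where t: "t \<in> F" "fst t = n"
        and tm: "\<forall>b\<in>{y\<in>F. fst y = n}. snd b \<le> snd t" by blast
      have "istop F t" unfolding istop_def using tm t by fastforce
      then have "phi k F t = n" using t by (simp add: phi_def)
      then show ?thesis using t by blast
    next
      case False
      define j where "j = n - k"
      have j: "1 \<le> j" "j < l" using False n by (auto simp: j_def)
      have "\<exists>y\<in>F. snd y = j \<and> \<not> istop F y"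
      proof (rule ccontr)
        assume "\<not> (\<exists>y\<in>F. snd y = j \<and> \<not> istop F y)"
        then have "\<forall>y\<in>F. snd y = j \<longrightarrow> istop F y" by blast
        from rowB[OF F nV j k root this] obtain x where "x \<in> grid k l - F" "\<not> hasV (insert x F)" by auto
        then show False using sat by blast
      qed
      then obtain y where y: "y \<in> F" "snd y = j" "\<not> istop F y" by blast
      then have "phi k F y = n" using False by (simp add: phi_def j_def)
      then show ?thesis using y by blast
    qed
  qed
  have "k + l - 1 = card {1..k + l - 1}" by simp
  also have "\<dots> \<le> card (phi k F ` F)" using sub finF by (intro card_mono) auto
  also have "\<dots> \<le> card F" by (rule card_image_le[OF finF])
  finally show ?thesis .
qed

definition chainC :: "nat \<Rightarrow> nat \<Rightarrow> (nat \<times> nat) set" where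
  "chainC k l = {x \<in> grid k l. fst x = 1 \<or> snd x = l}"

lemma chainC_props:
  assumes k: "1 \<le> k" and l: "1 \<le> l"
  shows "chainC k l \<subseteq> grid k l" "\<not> hasV (chainC k l)"
    "\<forall>x\<in>grid k l - chainC k l. hasV (insert x (chainC k l))"
proof -
  show "chainC k l \<subseteq> grid k l" by (auto simp: chainC_def)
  have comp: "grid_le a b \<or> grid_le b a" if "a \<in> chainC k l" "b \<in> chainC k l" for a b
    using that by (auto simp: chainC_def grid_def grid_le_def)
  show "\<not> hasV (chainC k l)" unfolding hasV_def using comp by blast
  show "\<forall>x\<in>grid k l - chainC k l. hasV (insert x (chainC k l))"
  proof
    fix x assume x: "x \<in> grid k l - chainC k l"
    then have xi: "fst x > 1" "snd x < l" "snd x \<ge> 1" "fst x \<le> k"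
      by (auto simp: chainC_def grid_def)
    have "(1, snd x) \<in> insert x (chainC k l)" "(1, l) \<in> insert x (chainC k l)"
      using xi k l by (auto simp: chainC_def grid_def)
    moreover have "x \<in> insert x (chainC k l)" by simp
    moreover have "(1, snd x) \<noteq> x" "(1, snd x) \<noteq> (1, l)" "grid_le (1, snd x) x" "grid_le (1, snd x) (1, l)"
      "\<not> grid_le x (1, l)" "\<not> grid_le (1, l) x"
      using xi by (auto simp: grid_le_def prod_eq_iff)
    ultimately show "hasV (insert x (chainC k l))" unfolding hasV_def by blast
  qed
qed

theorem theorem1p9:
  fixes k l :: nat
  assumes "k \<ge> 1" and "l \<ge> 1"
  shows "sat_star (grid k l) grid_le V2 V2_le = k + l - 1 \<and>
         La_star (grid k l) grid_le V2 V2_le = k + l - 1"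
proof -
  have finG: "finite (grid k l)" by (simp add: grid_def)
  define Sf where "Sf = {F. strong_free (grid k l) grid_le V2 V2_le F}"
  define Ss where "Ss = {F. strong_saturated (grid k l) grid_le V2 V2_le F}"
  have Sf_iff: "F \<in> Sf \<longleftrightarrow> F \<subseteq> grid k l \<and> \<not> hasV F" for F
    by (simp add: Sf_def strong_free_def hasV_iff)
  have Ss_iff: "F \<in> Ss \<longleftrightarrow> F \<subseteq> grid k l \<and> \<not> hasV F \<and> (\<forall>x\<in>grid k l - F. hasV (insert x F))" for F
    by (simp add: Ss_def strong_saturated_def strong_free_def hasV_iff)
  have CS: "chainC k l \<in> Ss" using chainC_props[OF assms] Ss_iff by blast
  have CF: "chainC k l \<in> Sf" using chainC_props[OF assms] Sf_iff by blast
  have cardC: "card (chainC k l) = k + l - 1"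
    using upper[of "chainC k l" k l] lower[of "chainC k l" k l] chainC_props[OF assms] assms
    by (meson le_antisym)
  have finSf: "finite Sf" using finG by (rule finite_subset[rotated, OF finite_Pow_iff[THEN iffD2]]) (auto simp: Sf_iff)
  have finSs: "finite Ss" using finG by (rule finite_subset[rotated, OF finite_Pow_iff[THEN iffD2]]) (auto simp: Ss_iff)
  have "Min (card ` Ss) = k + l - 1"
  proof (rule Min_eqI)
    show "finite (card ` Ss)" using finSs by simp
    show "k + l - 1 \<le> y" if "y \<in> card ` Ss" for y
      using that lower assms by (auto simp: Ss_iff)
    show "k + l - 1 \<in> card ` Ss" using CS cardC by force
  qed
  moreover have "Max (card ` Sf) = k + l - 1"
  proof (rule Max_eqI)
    show "finite (card ` Sf)" using finSf by simp
    show "y \<le> k + l - 1" if "y \<in> card ` Sf" for y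
      using that upper by (auto simp: Sf_iff)
    show "k + l - 1 \<in> card ` Sf" using CF cardC by force
  qed
  ultimately show ?thesis unfolding sat_star_def La_star_def Sf_def Ss_def by simp
qed

end
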